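(* Let $g=g(\lambda,\alpha,\delta)$ be a constraint. Then $T\cap\mathfrak{M}\cap\partial\bar{\mathcal{U}}_g$ is the union of two $2$-dimensional linear subspaces of $\mathbb{R}^5$.
   Context: Fix coordinates in $\mathbb{R}^3$ so that the line $\ell_0$ is the $z$-axis. A constraint is an (oriented) line meeting $\ell_0$ in exactly one point. For $\lambda,\alpha,\delta\in\mathbb{R}$, $g(\lambda,\alpha,\delta)$ denotes the constraint through the points $(0,0,\lambda)$ and $(\cos\alpha,\sin\alpha,\lambda+\delta)$ (every constraint is of this form). Its normal is $\eta_g=\big((1-\lambda)\sin\alpha,\,-(1-\lambda)\cos\alpha,\,\lambda\sin\alpha,\,-\lambda\cos\alpha\big)\in\mathbb{R}^4$. Define the closed halfspace $\bar{\mathcal{U}}_g=\{(u_1,\dots,u_5)\in\mathbb{R}^5\mid \delta u_5+\eta_g\cdot(u_1,u_2,u_3,u_4)\le0\}$, with boundary hyperplane $\partial\bar{\mathcal{U}}_g$. Let $\mathfrak{M}=\{u\in\mathbb{R}^5\mid u_5=u_2u_3-u_1u_4\}$ and $T=\{u\in\mathbb{R}^5\mid u_5=0\}$. *)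

theory Defs
  imports "HOL-Analysis.Analysis"
begin

text \<open>Points of R^5 are elements of real^5 with coordinates u$1,...,u$5;
  R^4 is real^4. The constraint g(lam,alpha,delta) is identified with its parameters.\<close>

definition eta_g :: "real \<Rightarrow> real \<Rightarrow> real^4" where
  "eta_g lam alpha = vector [(1 - lam) * sin alpha, - (1 - lam) * cos alpha,
                             lam * sin alpha, - lam * cos alpha]"

definition first4 :: "real^5 \<Rightarrow> real^4" where
  "first4 u = vector [u$1, u$2, u$3, u$4]"

definition U_bar :: "real \<Rightarrow> real \<Rightarrow> real \<Rightarrow> (real^5) set" where
  "U_bar lam alpha delta = {u. delta * u$5 + eta_g lam alpha \<bullet> first4 u \<le> 0}"

definition bdry_U_bar :: "real \<Rightarrow> real \<Rightarrow> real \<Rightarrow> (real^5) set" where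
  "bdry_U_bar lam alpha delta = {u. delta * u$5 + eta_g lam alpha \<bullet> first4 u = 0}"

definition frakM :: "(real^5) set" where
  "frakM = {u. u$5 = u$2 * u$3 - u$1 * u$4}"

definition T_hyp :: "(real^5) set" where
  "T_hyp = {u. u$5 = 0}"

end

theory Submission
  imports Defs
begin

lemma exhaust_5: fixes x :: 5 shows "x = 1 \<or> x = 2 \<or> x = 3 \<or> x = 4 \<or> x = 5"
proof (induct x)
  case (of_int z)
  then have "z = 0 \<or> z = 1 \<or> z = 2 \<or> z = 3 \<or> z = 4" by fastforce
  then show ?case by auto
qed
lemma vec5_eq: "(x::real^5) = y \<longleftrightarrow> x$1=y$1 \<and> x$2=y$2 \<and> x$3=y$3 \<and> x$4=y$4 \<and> x$5=y$5"
proof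
  assume h: "x$1=y$1 \<and> x$2=y$2 \<and> x$3=y$3 \<and> x$4=y$4 \<and> x$5=y$5"
  show "x = y" unfolding vec_eq_iff
  proof
    fix i :: 5
    show "x$i = y$i" using exhaust_5[of i] h by (elim disjE) simp_all
  qed
qed simp
lemma vector_4:
 "(vector [x,y,z,w] ::('a::zero)^4)$1 = x"
 "(vector [x,y,z,w] ::('a::zero)^4)$2 = y"
 "(vector [x,y,z,w] ::('a::zero)^4)$3 = z"
 "(vector [x,y,z,w] ::('a::zero)^4)$4 = w"
  unfolding vector_def by simp_all
lemma sum_4: "sum f (UNIV::4 set) = f 1 + f 2 + f 3 + f 4"
  unfolding UNIV_4 by (simp add: ac_simps)
lemma key: "eta_g lam alpha \<bullet> first4 u = (1-lam)*(sin alpha*u$1 - cos alpha*u$2) + lam*(sin alpha*u$3 - cos alpha*u$4)"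
  unfolding eta_g_def first4_def inner_vec_def sum_4 by (simp add: vector_4 algebra_simps)
lemma span_pair: "x \<in> span {a, b::'a::real_vector} \<longleftrightarrow> (\<exists>k j. x = k *\<^sub>R a + j *\<^sub>R b)"
  unfolding span_insert span_singleton by (auto simp: algebra_simps)
lemma memS: "u \<in> T_hyp \<inter> frakM \<inter> bdry_U_bar lam alpha delta \<longleftrightarrow>
  u$5 = 0 \<and> u$2*u$3 = u$1*u$4 \<and> (1-lam)*(sin alpha*u$1 - cos alpha*u$2) + lam*(sin alpha*u$3 - cos alpha*u$4) = 0"
  unfolding T_hyp_def frakM_def bdry_U_bar_def key by auto

lemma alg:
  fixes u1 u2 u3 u4 l s c :: real
  assumes "u2*u3 = u1*u4" "(1-l)*(s*u1 - c*u2) + l*(s*u3 - c*u4) = 0"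
  shows "((1-l)*u1+l*u3) * (s*u1 - c*u2) = 0" "((1-l)*u2+l*u4) * (s*u1 - c*u2) = 0"
        "((1-l)*u1+l*u3) * (s*u3 - c*u4) = 0" "((1-l)*u2+l*u4) * (s*u3 - c*u4) = 0"
proof -
  have e: "s*((1-l)*u1+l*u3) = c*((1-l)*u2+l*u4)" using assms(2) by (simp add: algebra_simps)
  show "((1-l)*u1+l*u3) * (s*u1 - c*u2) = 0"
  proof -
    have "((1-l)*u1+l*u3) * (s*u1 - c*u2) = u1*(s*((1-l)*u1+l*u3)) - c*u2*((1-l)*u1+l*u3)" by (simp add: algebra_simps)
    also have "\<dots> = c*(u1*((1-l)*u2+l*u4) - u2*((1-l)*u1+l*u3))" unfolding e by (simp add: algebra_simps)
    also have "\<dots> = c*l*(u1*u4-u2*u3)" by (simp add: algebra_simps)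
    finally show ?thesis using assms(1) by simp
  qed
  show "((1-l)*u2+l*u4) * (s*u1 - c*u2) = 0"
  proof -
    have "((1-l)*u2+l*u4) * (s*u1 - c*u2) = s*u1*((1-l)*u2+l*u4) - u2*(c*((1-l)*u2+l*u4))" by (simp add: algebra_simps)
    also have "\<dots> = s*(u1*((1-l)*u2+l*u4) - u2*((1-l)*u1+l*u3))" unfolding e[symmetric] by (simp add: algebra_simps)
    also have "\<dots> = s*l*(u1*u4-u2*u3)" by (simp add: algebra_simps)
    finally show ?thesis using assms(1) by simp
  qed
  show "((1-l)*u1+l*u3) * (s*u3 - c*u4) = 0"
  proof -
    have "((1-l)*u1+l*u3) * (s*u3 - c*u4) = u3*(s*((1-l)*u1+l*u3)) - c*u4*((1-l)*u1+l*u3)" by (simp add: algebra_simps)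
    also have "\<dots> = c*(u3*((1-l)*u2+l*u4) - u4*((1-l)*u1+l*u3))" unfolding e by (simp add: algebra_simps)
    also have "\<dots> = c*(1-l)*(u2*u3-u1*u4)" by (simp add: algebra_simps)
    finally show ?thesis using assms(1) by simp
  qed
  show "((1-l)*u2+l*u4) * (s*u3 - c*u4) = 0"
  proof -
    have "((1-l)*u2+l*u4) * (s*u3 - c*u4) = s*u3*((1-l)*u2+l*u4) - u4*(c*((1-l)*u2+l*u4))" by (simp add: algebra_simps)
    also have "\<dots> = s*(u3*((1-l)*u2+l*u4) - u4*((1-l)*u1+l*u3))" unfolding e[symmetric] by (simp add: algebra_simps)
    also have "\<dots> = s*(1-l)*(u2*u3-u1*u4)" by (simp add: algebra_simps)
    finally show ?thesis using assms(1) by simp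
  qed
qed

lemma indep2:
  fixes a b :: "real^5"
  assumes "b \<noteq> 0" "\<And>k. a \<noteq> k *\<^sub>R b"
  shows "independent {a, b}" "card {a,b} = 2"
proof -
  have "a \<notin> span {b}" using assms(2) unfolding span_singleton by auto
  moreover have "a \<noteq> b" using assms(2)[of 1] by auto
  ultimately show "independent {a, b}" using assms(1) by (simp add: independent_insert)
  show "card {a,b} = 2" using \<open>a \<noteq> b\<close> by simp
qed

lemma rot:
  fixes a b s c :: real
  assumes sc: "s * s + c*c = 1" and h: "s * a - c*b = 0"
  shows "a = (c*a + s * b)*c" "b = (c*a + s * b)* s"
proof -
  have h1: "c*b = s * a" and h2: "s * a = c*b" using h by simp_all
  have "(c*a + s * b)*c = c*c*a + s * (c*b)" by (simp add: algebra_simps)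
  also have "\<dots> = c*c*a + s * (s * a)" unfolding h1 ..
  also have "\<dots> = (s * s + c*c)*a" by (simp add: algebra_simps)
  finally show "a = (c*a + s * b)*c" using sc by simp
  have "(c*a + s * b)* s = c*(s * a) + s * s * b" by (simp add: algebra_simps)
  also have "\<dots> = c*(c*b) + s * s * b" unfolding h2 ..
  also have "\<dots> = (s * s + c*c)*b" by (simp add: algebra_simps)
  finally show "b = (c*a + s * b)* s" using sc by simp
qed

theorem lemma9:
  fixes lam alpha delta :: real
  shows "\<exists>V W :: (real^5) set. subspace V \<and> dim V = 2 \<and> subspace W \<and> dim W = 2 \<and> V \<noteq> W \<and>
           T_hyp \<inter> frakM \<inter> bdry_U_bar lam alpha delta = V \<union> W"
proof -
  define s where "s = sin alpha"
  define c where "c = cos alpha"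
  have sc: "s* s + c*c = 1" unfolding s_def c_def by (metis power2_eq_square sin_cos_squared_add)
  define v1 where "v1 = ((\<chi> i. if i = 1 then c else if i = 2 then s else 0) :: real^5)"
  define v2 where "v2 = ((\<chi> i. if i = 3 then c else if i = 4 then s else 0) :: real^5)"
  define w1 where "w1 = ((\<chi> i. if i = 1 then lam else if i = 3 then lam - 1 else 0) :: real^5)"
  define w2 where "w2 = ((\<chi> i. if i = 2 then lam else if i = 4 then lam - 1 else 0) :: real^5)"
  have v1c: "v1$1 = c" "v1$2 = s" "v1$3 = 0" "v1$4 = 0" "v1$5 = 0" unfolding v1_def by simp_all
  have v2c: "v2$1 = 0" "v2$2 = 0" "v2$3 = c" "v2$4 = s" "v2$5 = 0" unfolding v2_def by simp_all
  have w1c: "w1$1 = lam" "w1$2 = 0" "w1$3 = lam-1" "w1$4 = 0" "w1$5 = 0" unfolding w1_def by simp_all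
  have w2c: "w2$1 = 0" "w2$2 = lam" "w2$3 = 0" "w2$4 = lam-1" "w2$5 = 0" unfolding w2_def by simp_all
  have cs0: "c \<noteq> 0 \<or> s \<noteq> 0" using sc by auto
  have l0: "lam \<noteq> 0 \<or> lam - 1 \<noteq> 0" by auto
  have iV: "independent {v1, v2}" "card {v1,v2} = 2"
  proof -
    have "v2 \<noteq> 0" using cs0 v2c by (auto simp: vec5_eq)
    moreover have "v1 \<noteq> k *\<^sub>R v2" for k using cs0 v1c v2c by (auto simp: vec5_eq)
    ultimately show "independent {v1, v2}" "card {v1,v2} = 2" using indep2 by blast+
  qed
  have iW: "independent {w1, w2}" "card {w1,w2} = 2"
  proof -
    have "w2 \<noteq> 0" using l0 w2c by (auto simp: vec5_eq)
    moreover have "w1 \<noteq> k *\<^sub>R w2" for k using l0 w1c w2c by (auto simp: vec5_eq)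
    ultimately show "independent {w1, w2}" "card {w1,w2} = 2" using indep2 by blast+
  qed
  let ?V = "span {v1, v2}" and ?W = "span {w1, w2}"
  have dV: "dim ?V = 2" using iV dim_span_eq_card_independent by metis
  have dW: "dim ?W = 2" using iW dim_span_eq_card_independent by metis
  have neq: "?V \<noteq> ?W"
  proof
    assume eq: "?V = ?W"
    have "v1 \<in> ?W" "v2 \<in> ?W" using eq span_base[of v1 "{v1,v2}"] span_base[of v2 "{v1,v2}"] by auto
    then obtain k j k' j' where "v1 = k *\<^sub>R w1 + j *\<^sub>R w2" "v2 = k' *\<^sub>R w1 + j' *\<^sub>R w2"
      unfolding span_pair by blast
    then have "c = k*lam" "s = j*lam" "0 = k*(lam-1)" "0 = j*(lam-1)"
      "0 = k'*lam" "0 = j'*lam" "c = k'*(lam-1)" "s = j'*(lam-1)"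
      using v1c v2c w1c w2c by (auto simp: vec5_eq)
    then show False using cs0 by (cases "lam = 0") auto
  qed
  have "T_hyp \<inter> frakM \<inter> bdry_U_bar lam alpha delta = ?V \<union> ?W"
  proof (rule set_eqI)
    fix u :: "real^5"
    show "u \<in> T_hyp \<inter> frakM \<inter> bdry_U_bar lam alpha delta \<longleftrightarrow> u \<in> ?V \<union> ?W"
      unfolding memS Un_iff span_pair s_def[symmetric] c_def[symmetric]
    proof
      assume h: "u$5 = 0 \<and> u$2*u$3 = u$1*u$4 \<and> (1-lam)*(s*u$1 - c*u$2) + lam*(s*u$3 - c*u$4) = 0"
      note a = alg[of "u$2" "u$3" "u$1" "u$4" lam s c]
      show "(\<exists>k j. u = k *\<^sub>R v1 + j *\<^sub>R v2) \<or> (\<exists>k j. u = k *\<^sub>R w1 + j *\<^sub>R w2)"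
      proof (cases "(1-lam)*u$1+lam*u$3 = 0 \<and> (1-lam)*u$2+lam*u$4 = 0")
        case True
        have "u = (u$1 - u$3) *\<^sub>R w1 + (u$2 - u$4) *\<^sub>R w2"
        proof -
          have "u$1 = (u$1 - u$3) * lam" "u$3 = (u$1 - u$3) * (lam - 1)"
            "u$2 = (u$2 - u$4) * lam" "u$4 = (u$2 - u$4) * (lam - 1)"
            using True by (simp_all add: algebra_simps)
          then show ?thesis using h by (simp add: vec5_eq w1c w2c)
        qed
        then show ?thesis by blast
      next
        case False
        then have P: "s*u$1 - c*u$2 = 0" "s*u$3 - c*u$4 = 0" using a h by auto
        have "u = (c*u$1 + s*u$2) *\<^sub>R v1 + (c*u$3 + s*u$4) *\<^sub>R v2"
        proof -
          have "u$1 = (c*u$1 + s*u$2)*c"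
            using rot[OF sc P(1)] by simp
          moreover have "u$2 = (c*u$1 + s*u$2)* s"
            using rot[OF sc P(1)] by simp
          moreover have "u$3 = (c*u$3 + s*u$4)*c"
            using rot[OF sc P(2)] by simp
          moreover have "u$4 = (c*u$3 + s*u$4)* s"
            using rot[OF sc P(2)] by simp
          ultimately show ?thesis using h v1c v2c by (simp add: vec5_eq)
        qed
        then show ?thesis by blast
      qed
    next
      assume "(\<exists>k j. u = k *\<^sub>R v1 + j *\<^sub>R v2) \<or> (\<exists>k j. u = k *\<^sub>R w1 + j *\<^sub>R w2)"
      then show "u$5 = 0 \<and> u$2*u$3 = u$1*u$4 \<and> (1-lam)*(s*u$1 - c*u$2) + lam*(s*u$3 - c*u$4) = 0"
      proof (elim disjE exE)
        fix k j assume "u = k *\<^sub>R v1 + j *\<^sub>R v2"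
        then have "u$1 = k*c" "u$2 = k * s" "u$3 = j*c" "u$4 = j * s" "u$5 = 0" by (simp_all add: v1c v2c)
        note e = this
        show ?thesis unfolding e by (simp add: algebra_simps)
      next
        fix k j assume "u = k *\<^sub>R w1 + j *\<^sub>R w2"
        then have "u$1 = k*lam" "u$2 = j*lam" "u$3 = k*(lam-1)" "u$4 = j*(lam-1)" "u$5 = 0" by (simp_all add: w1c w2c)
        note e = this
        show ?thesis unfolding e by (simp add: algebra_simps)
      qed
    qed
  qed
  then show ?thesis using dV dW neq by (intro exI[of _ ?V] exI[of _ ?W]) (auto intro: subspace_span)
qed
end
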